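(* Let $S(t,p,q,x,y,u,v)=\sum_{\pi}t^{|\pi|}p^{\mathrm{asc}(\pi)}q^{\mathrm{des}(\pi)}x^{\mathrm{lmax}(\pi)}y^{\mathrm{rmax}(\pi)}u^{\mathrm{lmin}(\pi)}v^{\mathrm{rmin}(\pi)}$ over all separable permutations and $I(t,p,q,x,y,u,v)$ the same sum over irreducible separable permutations. Then $$S(t,p,q,x,y,u,v)-I(t,p,q,x,y,u,v)=p\,I(t,p,q,x,1,u,v)\,S(t,p,q,x,y,1,v)=p\,I(t,p,q,x,y,1,v)\,S(t,p,q,x,1,u,v).$$
   Context: A permutation of length $n$ is a word $\pi=\pi_1\cdots\pi_n$ containing each element of $[n]$ exactly once; $|\pi|=n$. For $\pi$ of length $m$, $\sigma$ of length $n$: $\pi\oplus\sigma=\pi_1\cdots\pi_m(\sigma_1+m)\cdots(\sigma_n+m)$, $\pi\ominus\sigma=(\pi_1+n)\cdots(\pi_m+n)\sigma_1\cdots\sigma_n$. Separable permutations are those of length $\ge1$ obtained from $1$ by repeatedly applying $\oplus,\ominus$ (equivalently, avoiding $2413$ and $3142$). The permutation $1$ is irreducible; a permutation of length $n\ge2$ is irreducible if there is no $i$, $2\le i\le n$, such that every element of $\pi_1\cdots\pi_{i-1}$ is less than every element of $\pi_i\cdots\pi_n$. $\mathrm{asc}(\pi)=\#\{i<n:\pi_i<\pi_{i+1}\}$, $\mathrm{des}(\pi)=\#\{i<n:\pi_i>\pi_{i+1}\}$; $\pi_i$ is a left-to-right maximum (minimum) if $\pi_i>\pi_j$ ($\pi_i<\pi_j$)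 for all $j<i$, a right-to-left maximum (minimum) if $\pi_i>\pi_j$ ($\pi_i<\pi_j$) for all $j>i$; $\mathrm{lmax},\mathrm{lmin},\mathrm{rmax},\mathrm{rmin}$ count these. (The paper writes $I(t,p,q,x,u,v)$ etc., omitting arguments equal to $1$.) *)

theory Defs
  imports "HOL-Computational_Algebra.Formal_Power_Series"
begin

text \<open>Permutations are lists of naturals; a permutation of length n is a list
containing each element of {1..n} exactly once.\<close>

definition oplus :: "nat list \<Rightarrow> nat list \<Rightarrow> nat list" where
  "oplus \<pi> \<sigma> = \<pi> @ map (\<lambda>s. s + length \<pi>) \<sigma>"

definition ominus :: "nat list \<Rightarrow> nat list \<Rightarrow> nat list" where
  "ominus \<pi> \<sigma> = map (\<lambda>s. s + length \<sigma>) \<pi> @ \<sigma>"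

inductive separable :: "nat list \<Rightarrow> bool" where
  one: "separable [1]"
| plus: "separable \<pi> \<Longrightarrow> separable \<sigma> \<Longrightarrow> separable (oplus \<pi> \<sigma>)"
| minus: "separable \<pi> \<Longrightarrow> separable \<sigma> \<Longrightarrow> separable (ominus \<pi> \<sigma>)"

text \<open>For [1] this is vacuous, matching the convention that 1 is irreducible.\<close>
definition irreducible_perm :: "nat list \<Rightarrow> bool" where
  "irreducible_perm \<pi> \<longleftrightarrow>
     \<not> (\<exists>i. 1 \<le> i \<and> i < length \<pi> \<and>
            (\<forall>a\<in>set (take i \<pi>). \<forall>b\<in>set (drop i \<pi>). a < b))"

definition asc :: "nat list \<Rightarrow> nat" where
  "asc \<pi> = card {i. i + 1 < length \<pi> \<and> \<pi> ! i < \<pi> ! (i + 1)}"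

definition des :: "nat list \<Rightarrow> nat" where
  "des \<pi> = card {i. i + 1 < length \<pi> \<and> \<pi> ! i > \<pi> ! (i + 1)}"

definition lmax :: "nat list \<Rightarrow> nat" where
  "lmax \<pi> = card {i. i < length \<pi> \<and> (\<forall>j<i. \<pi> ! i > \<pi> ! j)}"

definition lmin :: "nat list \<Rightarrow> nat" where
  "lmin \<pi> = card {i. i < length \<pi> \<and> (\<forall>j<i. \<pi> ! i < \<pi> ! j)}"

definition rmax :: "nat list \<Rightarrow> nat" where
  "rmax \<pi> = card {i. i < length \<pi> \<and> (\<forall>j. i < j \<and> j < length \<pi> \<longrightarrow> \<pi> ! i > \<pi> ! j)}"

definition rmin :: "nat list \<Rightarrow> nat" where
  "rmin \<pi> = card {i. i < length \<pi> \<and> (\<forall>j. i < j \<and> j < length \<pi> \<longrightarrow> \<pi> ! i < \<pi> ! j)}"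

definition perm_weight :: "'a::comm_ring_1 \<Rightarrow> 'a \<Rightarrow> 'a \<Rightarrow> 'a \<Rightarrow> 'a \<Rightarrow> 'a \<Rightarrow> nat list \<Rightarrow> 'a" where
  "perm_weight p q x y u v \<pi> =
     p ^ asc \<pi> * q ^ des \<pi> * x ^ lmax \<pi> * y ^ rmax \<pi> * u ^ lmin \<pi> * v ^ rmin \<pi>"

text \<open>Generating functions as formal power series in t (t^n marks length n),
with the remaining variables specialised to arbitrary elements of a commutative ring.\<close>
definition S_gf :: "'a::comm_ring_1 \<Rightarrow> 'a \<Rightarrow> 'a \<Rightarrow> 'a \<Rightarrow> 'a \<Rightarrow> 'a \<Rightarrow> 'a fps" where
  "S_gf p q x y u v = Abs_fps (\<lambda>n.
     \<Sum>\<pi>\<in>{\<pi>. separable \<pi> \<and> length \<pi> = n}. perm_weight p q x y u v \<pi>)"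

definition I_gf :: "'a::comm_ring_1 \<Rightarrow> 'a \<Rightarrow> 'a \<Rightarrow> 'a \<Rightarrow> 'a \<Rightarrow> 'a \<Rightarrow> 'a fps" where
  "I_gf p q x y u v = Abs_fps (\<lambda>n.
     \<Sum>\<pi>\<in>{\<pi>. separable \<pi> \<and> irreducible_perm \<pi> \<and> length \<pi> = n}. perm_weight p q x y u v \<pi>)"

end

theory Submission
  imports Defs
begin


definition splits :: "nat list \<Rightarrow> nat \<Rightarrow> bool" where
  "splits \<pi> i \<longleftrightarrow> 1 \<le> i \<and> i < length \<pi> \<and> (\<forall>a\<in>set (take i \<pi>). \<forall>b\<in>set (drop i \<pi>). a < b)"

lemma irr_iff: "irreducible_perm \<pi> \<longleftrightarrow> \<not> (\<exists>i. splits \<pi> i)"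
  by (simp add: irreducible_perm_def splits_def)

lemma sep_basic: "separable \<pi> \<Longrightarrow> \<pi> \<noteq> [] \<and> (\<forall>s\<in>set \<pi>. 1 \<le> s \<and> s \<le> length \<pi>)"
proof (induction rule: separable.induct)
  case one
  then show ?case by simp
next
  case (plus \<pi> \<sigma>)
  then show ?case by (auto simp: oplus_def)
next
  case (minus \<pi> \<sigma>)
  then show ?case by (fastforce simp: ominus_def)
qed

lemma finite_sep: "finite {\<pi>. separable \<pi> \<and> length \<pi> = n}"
proof -
  have "{\<pi>. separable \<pi> \<and> length \<pi> = n} \<subseteq> {xs. set xs \<subseteq> {1..n} \<and> length xs = n}"
    using sep_basic by fastforce
  moreover have "finite {xs. set xs \<subseteq> {1..n} \<and> length xs = n}"
    by (rule finite_lists_length_eq) simp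
  ultimately show ?thesis by (rule finite_subset)
qed

lemma sep_split:
  "separable \<pi> \<Longrightarrow> splits \<pi> i \<Longrightarrow> separable (take i \<pi>) \<and> separable (map (\<lambda>s. s - i) (drop i \<pi>))
     \<and> (\<forall>s\<in>set (drop i \<pi>). i < s)"
proof (induction arbitrary: i rule: separable.induct)
  case one
  then show ?case by (auto simp: splits_def)
next
  case (plus a b)
  have ba: "a \<noteq> []" "\<forall>s\<in>set a. 1 \<le> s \<and> s \<le> length a" using sep_basic[OF plus.hyps(1)] by auto
  have bb: "b \<noteq> []" "\<forall>s\<in>set b. 1 \<le> s \<and> s \<le> length b" using sep_basic[OF plus.hyps(2)] by auto
  have sp: "1 \<le> i" "i < length a + length b"
    "\<forall>x\<in>set (take i (oplus a b)). \<forall>y\<in>set (drop i (oplus a b)). x < y"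
    using plus.prems by (auto simp: splits_def oplus_def)
  consider "i = length a" | "i < length a" | "i > length a" by linarith
  then show ?case
  proof cases
    case 1
    have "map (\<lambda>s. s - i) (map (\<lambda>s. s + length a) b) = b" by (simp add: 1 comp_def)
    then show ?thesis using 1 plus.hyps bb by (auto simp: oplus_def)
  next
    case 2
    have "splits a i" unfolding splits_def
    proof (intro conjI ballI)
      fix x y assume "x \<in> set (take i a)" "y \<in> set (drop i a)"
      then show "x < y" using sp(3) 2 by (auto simp: oplus_def)
    qed (use sp 2 in auto)
    from plus.IH(1)[OF this] have IH: "separable (take i a)" "separable (map (\<lambda>s. s - i) (drop i a))"
      "\<forall>s\<in>set (drop i a). i < s" by auto
    have e: "map (\<lambda>s. s - i) (drop i (oplus a b)) = oplus (map (\<lambda>s. s - i) (drop i a)) b"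
      using 2 by (simp add: oplus_def comp_def)
    have "separable (oplus (map (\<lambda>s. s - i) (drop i a)) b)" using IH(2) plus.hyps(2) by (rule separable.plus)
    then have s2: "separable (map (\<lambda>s. s - i) (drop i (oplus a b)))" unfolding e .
    have "take i (oplus a b) = take i a" using 2 by (simp add: oplus_def)
    then show ?thesis using IH 2 s2 bb by (auto simp: oplus_def)
  next
    case 3
    define j where "j = i - length a"
    have ij: "i = length a + j" "1 \<le> j" "j < length b" using 3 sp by (auto simp: j_def)
    have tk: "take i (oplus a b) = oplus a (take j b)" using ij by (simp add: oplus_def take_map drop_map)
    have dr: "drop i (oplus a b) = map (\<lambda>s. s + length a) (drop j b)" using ij by (simp add: oplus_def take_map drop_map)
    have "splits b j" unfolding splits_def
    proof (intro conjI ballI)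
      fix x y assume "x \<in> set (take j b)" "y \<in> set (drop j b)"
      then have "x + length a \<in> set (take i (oplus a b))" "y + length a \<in> set (drop i (oplus a b))"
        unfolding tk dr by (auto simp: oplus_def)
      then show "x < y" using sp(3) by fastforce
    qed (use ij in auto)
    from plus.IH(2)[OF this] have IH: "separable (take j b)" "separable (map (\<lambda>s. s - j) (drop j b))"
      "\<forall>s\<in>set (drop j b). j < s" by auto
    have "map (\<lambda>s. s - i) (drop i (oplus a b)) = map (\<lambda>s. s - j) (drop j b)"
      unfolding dr using ij by (simp add: comp_def)
    then have s2: "separable (map (\<lambda>s. s - i) (drop i (oplus a b)))" using IH(2) by simp
    have s1: "separable (take i (oplus a b))" unfolding tk using plus.hyps(1) IH(1) by (rule separable.plus)
    show ?thesis using IH(3) s1 s2 unfolding dr using ij by auto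
  qed
next
  case (minus a b)
  have ba: "a \<noteq> []" "\<forall>s\<in>set a. 1 \<le> s \<and> s \<le> length a" using sep_basic[OF minus.hyps(1)] by auto
  have bb: "b \<noteq> []" "\<forall>s\<in>set b. 1 \<le> s \<and> s \<le> length b" using sep_basic[OF minus.hyps(2)] by auto
  let ?p = "ominus a b"
  have sp: "1 \<le> i" "i < length ?p"
    "\<forall>x\<in>set (take i ?p). \<forall>y\<in>set (drop i ?p). x < y"
    using minus.prems by (auto simp: splits_def)
  have "hd (take i ?p) \<in> set (take i ?p)" using sp by (intro hd_in_set) auto
  moreover have "last (drop i ?p) \<in> set (drop i ?p)" using sp by (intro last_in_set) auto
  ultimately have "hd ?p < last ?p" using sp by (simp add: hd_take last_drop)
  moreover have "hd ?p = hd a + length b" using ba by (cases a) (auto simp: ominus_def)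
  moreover have "last ?p = last b" using bb by (simp add: ominus_def)
  moreover have "hd a \<ge> 1" using ba by (cases a) auto
  moreover have "last b \<le> length b" using bb by auto
  ultimately show ?case by linarith
qed



lemma card_split: "card {i::nat. i < m + n \<and> P i} = card {i. i < m \<and> P i} + card {j. j < n \<and> P (m + j)}"
proof -
  have e: "{i. i < m + n \<and> P i} = {i. i < m \<and> P i} \<union> (\<lambda>j. m + j) ` {j. j < n \<and> P (m + j)}"
  proof (intro set_eqI iffI)
    fix i assume i: "i \<in> {i. i < m + n \<and> P i}"
    show "i \<in> {i. i < m \<and> P i} \<union> (\<lambda>j. m + j) ` {j. j < n \<and> P (m + j)}"
    proof (cases "i < m")
      case True then show ?thesis using i by simp
    next
      case False
      then have "i = m + (i - m)" by simp
      moreover have "i - m \<in> {j. j < n \<and> P (m + j)}" using i False by auto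
      ultimately show ?thesis by blast
    qed
  qed auto
  have "card ({i. i < m \<and> P i} \<union> (\<lambda>j. m + j) ` {j. j < n \<and> P (m + j)})
     = card {i. i < m \<and> P i} + card ((\<lambda>j. m + j) ` {j. j < n \<and> P (m + j)})"
    by (rule card_Un_disjoint) auto
  also have "card ((\<lambda>j. m + j) ` {j. j < n \<and> P (m + j)}) = card {j. j < n \<and> P (m + j)}"
    by (rule card_image) auto
  finally show ?thesis unfolding e .
qed

locale cat =
  fixes A B :: "nat list"
  assumes An: "A \<noteq> []" and Bn: "B \<noteq> []" and lt: "\<forall>a\<in>set A. \<forall>b\<in>set B. a < b"
begin

lemma ltn: "i < length A \<Longrightarrow> j < length B \<Longrightarrow> A ! i < B ! j"
  using lt by auto

lemma asc_cat: "asc (A @ B) = asc A + asc B + 1"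
proof -
  let ?P = "\<lambda>i. (A @ B) ! i < (A @ B) ! (i + 1)"
  have "{i. i + 1 < length (A @ B) \<and> ?P i} = {i. i < length A + (length B - 1) \<and> ?P i}"
    using Bn by (cases B) auto
  then have "asc (A @ B) = card {i. i < length A \<and> ?P i} + card {j. j < length B - 1 \<and> ?P (length A + j)}"
    by (simp add: asc_def card_split)
  also have "{i. i < length A \<and> ?P i} = insert (length A - 1) {i. i + 1 < length A \<and> A ! i < A ! (i + 1)}"
  proof -
    have "?P (length A - 1)" using An Bn ltn[of "length A - 1" 0] by (simp add: nth_append)
    then show ?thesis using An by (auto simp: nth_append)
  qed
  also have "{j. j < length B - 1 \<and> ?P (length A + j)} = {i. i + 1 < length B \<and> B ! i < B ! (i + 1)}"
    by (auto simp: nth_append)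
  also have "card (insert (length A - 1) {i. i + 1 < length A \<and> A ! i < A ! (i + 1)})
      = card {i. i + 1 < length A \<and> A ! i < A ! (i + 1)} + 1"
    by (subst card_insert_disjoint) (auto intro: finite_subset[of _ "{..<length A}"])
  finally show ?thesis by (simp add: asc_def)
qed

lemma des_cat: "des (A @ B) = des A + des B"
proof -
  let ?P = "\<lambda>i. (A @ B) ! i > (A @ B) ! (i + 1)"
  have "{i. i + 1 < length (A @ B) \<and> ?P i} = {i. i < length A + (length B - 1) \<and> ?P i}"
    using Bn by (cases B) auto
  then have "des (A @ B) = card {i. i < length A \<and> ?P i} + card {j. j < length B - 1 \<and> ?P (length A + j)}"
    by (simp add: des_def card_split)
  also have "{i. i < length A \<and> ?P i} = {i. i + 1 < length A \<and> A ! i > A ! (i + 1)}"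
  proof -
    have "\<not> ?P (length A - 1)" using An Bn ltn[of "length A - 1" 0] by (simp add: nth_append)
    note np = this
    have "i < length A \<and> ?P i \<longleftrightarrow> i + 1 < length A \<and> A ! i > A ! (i + 1)" for i
    proof (cases "i + 1 < length A")
      case True then show ?thesis by (simp add: nth_append)
    next
      case False then show ?thesis using np by (cases "i = length A - 1") auto
    qed
    then show ?thesis by blast
  qed
  also have "{j. j < length B - 1 \<and> ?P (length A + j)} = {i. i + 1 < length B \<and> B ! i > B ! (i + 1)}"
    by (auto simp: nth_append)
  finally show ?thesis by (simp add: des_def)
qed

lemma lmax_cat: "lmax (A @ B) = lmax A + lmax B"
proof -
  let ?P = "\<lambda>i. \<forall>j<i. (A @ B) ! i > (A @ B) ! j"
  have "lmax (A @ B) = card {i. i < length A \<and> ?P i} + card {j. j < length B \<and> ?P (length A + j)}"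
    by (simp add: lmax_def card_split)
  also have "{i. i < length A \<and> ?P i} = {i. i < length A \<and> (\<forall>j<i. A ! i > A ! j)}"
    by (auto simp: nth_append)
  also have "{j. j < length B \<and> ?P (length A + j)} = {i. i < length B \<and> (\<forall>j<i. B ! i > B ! j)}"
  proof -
    have "?P (length A + i) \<longleftrightarrow> (\<forall>j<i. B ! i > B ! j)" if "i < length B" for i
    proof
      assume h: "?P (length A + i)"
      show "\<forall>j<i. B ! i > B ! j"
      proof (intro allI impI)
        fix j assume "j < i" with h[rule_format, of "length A + j"] show "B ! i > B ! j" by (simp add: nth_append)
      qed
    next
      assume h: "\<forall>j<i. B ! i > B ! j"
      show "?P (length A + i)"
      proof (intro allI impI)
        fix j assume j: "j < length A + i"
        show "(A @ B) ! (length A + i) > (A @ B) ! j"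
        proof (cases "j < length A")
          case True then show ?thesis using ltn[of j i] that by (simp add: nth_append)
        next
          case False then show ?thesis using h[rule_format, of "j - length A"] j by (simp add: nth_append)
        qed
      qed
    qed
    then show ?thesis by auto
  qed
  finally show ?thesis by (simp add: lmax_def)
qed

lemma lmin_cat: "lmin (A @ B) = lmin A"
proof -
  let ?P = "\<lambda>i. \<forall>j<i. (A @ B) ! i < (A @ B) ! j"
  have "lmin (A @ B) = card {i. i < length A \<and> ?P i} + card {j. j < length B \<and> ?P (length A + j)}"
    by (simp add: lmin_def card_split)
  also have "{i. i < length A \<and> ?P i} = {i. i < length A \<and> (\<forall>j<i. A ! i < A ! j)}"
    by (auto simp: nth_append)
  also have "{j. j < length B \<and> ?P (length A + j)} = {}"
  proof -
    have "\<not> ?P (length A + i)" if "i < length B" for i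
    proof
      assume h: "?P (length A + i)"
      have z: "0 < length A + i" using An by simp
      have gt: "(A @ B) ! (length A + i) > (A @ B) ! 0" using An that ltn[of 0 i] by (simp add: nth_append)
      from h z have "(A @ B) ! (length A + i) < (A @ B) ! 0" by blast
      with gt show False by simp
    qed
    then show ?thesis by auto
  qed
  finally show ?thesis by (simp add: lmin_def)
qed

lemma rmax_cat: "rmax (A @ B) = rmax B"
proof -
  let ?P = "\<lambda>i. \<forall>j. i < j \<and> j < length (A @ B) \<longrightarrow> (A @ B) ! i > (A @ B) ! j"
  have "rmax (A @ B) = card {i. i < length A \<and> ?P i} + card {j. j < length B \<and> ?P (length A + j)}"
    by (simp add: rmax_def card_split)
  also have "{i. i < length A \<and> ?P i} = {}"
  proof -
    have "\<not> ?P i" if "i < length A" for i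
    proof
      assume h: "?P i"
      have z: "i < length A \<and> length A < length (A @ B)" using Bn that by simp
      have gt: "(A @ B) ! i < (A @ B) ! (length A)" using Bn that ltn[of i 0] by (simp add: nth_append)
      from h z have "(A @ B) ! i > (A @ B) ! (length A)" by blast
      with gt show False by simp
    qed
    then show ?thesis by auto
  qed
  also have "{j. j < length B \<and> ?P (length A + j)} = {i. i < length B \<and> (\<forall>j. i < j \<and> j < length B \<longrightarrow> B ! i > B ! j)}"
  proof -
    have "?P (length A + i) \<longleftrightarrow> (\<forall>j. i < j \<and> j < length B \<longrightarrow> B ! i > B ! j)" if "i < length B" for i
    proof
      assume h: "?P (length A + i)"
      show "\<forall>j. i < j \<and> j < length B \<longrightarrow> B ! i > B ! j"
      proof (intro allI impI)
        fix j assume "i < j \<and> j < length B" with h[rule_format, of "length A + j"] show "B ! i > B ! j" by (simp add: nth_append)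
      qed
    next
      assume h: "\<forall>j. i < j \<and> j < length B \<longrightarrow> B ! i > B ! j"
      show "?P (length A + i)"
      proof (intro allI impI)
        fix j assume j: "length A + i < j \<and> j < length (A @ B)"
        show "(A @ B) ! (length A + i) > (A @ B) ! j"
        proof -
          have "i < j - length A" "j - length A < length B" using j by auto
          then show ?thesis using h j by (simp add: nth_append)
        qed
      qed
    qed
    then show ?thesis by auto
  qed
  finally show ?thesis by (simp add: rmax_def)
qed

lemma rmin_cat: "rmin (A @ B) = rmin A + rmin B"
proof -
  let ?P = "\<lambda>i. \<forall>j. i < j \<and> j < length (A @ B) \<longrightarrow> (A @ B) ! i < (A @ B) ! j"
  have "rmin (A @ B) = card {i. i < length A \<and> ?P i} + card {j. j < length B \<and> ?P (length A + j)}"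
    by (simp add: rmin_def card_split)
  also have "{i. i < length A \<and> ?P i} = {i. i < length A \<and> (\<forall>j. i < j \<and> j < length A \<longrightarrow> A ! i < A ! j)}"
  proof -
    have "?P i \<longleftrightarrow> (\<forall>j. i < j \<and> j < length A \<longrightarrow> A ! i < A ! j)" if "i < length A" for i
    proof
      assume h: "?P i"
      show "\<forall>j. i < j \<and> j < length A \<longrightarrow> A ! i < A ! j"
      proof (intro allI impI)
        fix j assume "i < j \<and> j < length A" with h[rule_format, of j] that show "A ! i < A ! j" by (simp add: nth_append)
      qed
    next
      assume h: "\<forall>j. i < j \<and> j < length A \<longrightarrow> A ! i < A ! j"
      show "?P i"
      proof (intro allI impI)
        fix j assume j: "i < j \<and> j < length (A @ B)"
        show "(A @ B) ! i < (A @ B) ! j"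
        proof (cases "j < length A")
          case True then show ?thesis using h j that by (simp add: nth_append)
        next
          case False then show ?thesis using ltn[of i "j - length A"] j that by (simp add: nth_append)
        qed
      qed
    qed
    then show ?thesis by auto
  qed
  also have "{j. j < length B \<and> ?P (length A + j)} = {i. i < length B \<and> (\<forall>j. i < j \<and> j < length B \<longrightarrow> B ! i < B ! j)}"
  proof -
    have "?P (length A + i) \<longleftrightarrow> (\<forall>j. i < j \<and> j < length B \<longrightarrow> B ! i < B ! j)" if "i < length B" for i
    proof
      assume h: "?P (length A + i)"
      show "\<forall>j. i < j \<and> j < length B \<longrightarrow> B ! i < B ! j"
      proof (intro allI impI)
        fix j assume "i < j \<and> j < length B" with h[rule_format, of "length A + j"] show "B ! i < B ! j" by (simp add: nth_append)
      qed
    next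
      assume h: "\<forall>j. i < j \<and> j < length B \<longrightarrow> B ! i < B ! j"
      show "?P (length A + i)"
      proof (intro allI impI)
        fix j assume j: "length A + i < j \<and> j < length (A @ B)"
        show "(A @ B) ! (length A + i) < (A @ B) ! j"
        proof -
          have "i < j - length A" "j - length A < length B" using j by auto
          then show ?thesis using h j by (simp add: nth_append)
        qed
      qed
    qed
    then show ?thesis by auto
  qed
  finally show ?thesis by (simp add: rmin_def)
qed

end

lemma shift_stats:
  fixes c :: nat
  shows "asc (map (\<lambda>s. s + c) B) = asc B" "des (map (\<lambda>s. s + c) B) = des B"
    "lmax (map (\<lambda>s. s + c) B) = lmax B" "lmin (map (\<lambda>s. s + c) B) = lmin B"
    "rmax (map (\<lambda>s. s + c) B) = rmax B" "rmin (map (\<lambda>s. s + c) B) = rmin B"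
  unfolding asc_def des_def lmax_def lmin_def rmax_def rmin_def
  by ((rule arg_cong[where f=card], rule Collect_cong, auto)+)

lemma weight_oplus:
  assumes "separable \<alpha>" "separable \<beta>"
  shows "perm_weight p q x y u v (oplus \<alpha> \<beta>) = p * perm_weight p q x 1 u v \<alpha> * perm_weight p q x y 1 v \<beta>"
proof -
  have ba: "\<alpha> \<noteq> []" "\<forall>s\<in>set \<alpha>. 1 \<le> s \<and> s \<le> length \<alpha>" using sep_basic[OF assms(1)] by auto
  have bb: "\<beta> \<noteq> []" "\<forall>s\<in>set \<beta>. 1 \<le> s \<and> s \<le> length \<beta>" using sep_basic[OF assms(2)] by auto
  interpret cat \<alpha> "map (\<lambda>s. s + length \<alpha>) \<beta>"
    using ba bb by unfold_locales fastforce+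
  have st: "asc (oplus \<alpha> \<beta>) = asc \<alpha> + asc \<beta> + 1" "des (oplus \<alpha> \<beta>) = des \<alpha> + des \<beta>"
    "lmax (oplus \<alpha> \<beta>) = lmax \<alpha> + lmax \<beta>" "lmin (oplus \<alpha> \<beta>) = lmin \<alpha>"
    "rmax (oplus \<alpha> \<beta>) = rmax \<beta>" "rmin (oplus \<alpha> \<beta>) = rmin \<alpha> + rmin \<beta>"
    unfolding oplus_def by (simp_all only: asc_cat des_cat lmax_cat lmin_cat rmax_cat rmin_cat shift_stats)
  show ?thesis unfolding perm_weight_def st power_add power_one_right power_one mult_1_right mult_1_left
    by (simp only: mult_ac)
qed



lemma splits_take: "splits \<pi> i \<Longrightarrow> splits \<pi> j \<Longrightarrow> i < j \<Longrightarrow> splits (take j \<pi>) i"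
  unfolding splits_def
proof (intro conjI ballI)
  fix a b assume h: "1 \<le> i \<and> i < length \<pi> \<and> (\<forall>a\<in>set (take i \<pi>). \<forall>b\<in>set (drop i \<pi>). a < b)"
    "1 \<le> j \<and> j < length \<pi> \<and> (\<forall>a\<in>set (take j \<pi>). \<forall>b\<in>set (drop j \<pi>). a < b)" "i < j"
    and a: "a \<in> set (take i (take j \<pi>))" and b: "b \<in> set (drop i (take j \<pi>))"
  have "a \<in> set (take i \<pi>)" using a h(3) by (simp add: min_def)
  moreover have "b \<in> set (drop i \<pi>)" using b by (metis drop_take in_set_takeD)
  ultimately show "a < b" using h(1) by blast
qed auto

lemma splits_drop: "splits \<pi> i \<Longrightarrow> splits \<pi> j \<Longrightarrow> i < j \<Longrightarrow> splits (drop i \<pi>) (j - i)"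
  unfolding splits_def
proof (intro conjI ballI)
  fix a b assume h: "1 \<le> i \<and> i < length \<pi> \<and> (\<forall>a\<in>set (take i \<pi>). \<forall>b\<in>set (drop i \<pi>). a < b)"
    "1 \<le> j \<and> j < length \<pi> \<and> (\<forall>a\<in>set (take j \<pi>). \<forall>b\<in>set (drop j \<pi>). a < b)" "i < j"
    and a: "a \<in> set (take (j - i) (drop i \<pi>))" and b: "b \<in> set (drop (j - i) (drop i \<pi>))"
  have "a \<in> set (take j \<pi>)" using a h(3) by (metis in_set_dropD le_add_diff_inverse2 less_imp_le take_drop)
  moreover have "b \<in> set (drop j \<pi>)" using b h(3) by simp
  ultimately show "a < b" using h(2) by blast
qed auto

lemma splits_from_take: "splits (take i \<pi>) j \<Longrightarrow> splits \<pi> i \<Longrightarrow> splits \<pi> j"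
  unfolding splits_def
proof (intro conjI ballI)
  fix a b assume h: "1 \<le> j \<and> j < length (take i \<pi>) \<and> (\<forall>a\<in>set (take j (take i \<pi>)). \<forall>b\<in>set (drop j (take i \<pi>)). a < b)"
    "1 \<le> i \<and> i < length \<pi> \<and> (\<forall>a\<in>set (take i \<pi>). \<forall>b\<in>set (drop i \<pi>). a < b)"
    and a: "a \<in> set (take j \<pi>)" and b: "b \<in> set (drop j \<pi>)"
  have ji: "j < i" using h(1) by simp
  have a1: "a \<in> set (take j (take i \<pi>))" using a ji by (simp add: min_def)
  have a2: "a \<in> set (take i \<pi>)" using a1 by (meson in_set_takeD)
  have li: "length (take i \<pi>) = i" using h(2) by simp
  have "drop j \<pi> = drop j (take i \<pi> @ drop i \<pi>)" by simp
  also have "\<dots> = drop j (take i \<pi>) @ drop i \<pi>" using ji li by (simp only: drop_append) simp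
  finally have "drop j \<pi> = drop j (take i \<pi>) @ drop i \<pi>" .
  then have "b \<in> set (drop j (take i \<pi>)) \<or> b \<in> set (drop i \<pi>)" using b by simp
  then show "a < b" using h a1 a2 by blast
qed (auto)

lemma splits_from_drop: "splits (drop i \<pi>) j \<Longrightarrow> splits \<pi> i \<Longrightarrow> splits \<pi> (i + j)"
  unfolding splits_def
proof (intro conjI ballI)
  fix a b assume h: "1 \<le> j \<and> j < length (drop i \<pi>) \<and> (\<forall>a\<in>set (take j (drop i \<pi>)). \<forall>b\<in>set (drop j (drop i \<pi>)). a < b)"
    "1 \<le> i \<and> i < length \<pi> \<and> (\<forall>a\<in>set (take i \<pi>). \<forall>b\<in>set (drop i \<pi>). a < b)"
    and a: "a \<in> set (take (i + j) \<pi>)" and b: "b \<in> set (drop (i + j) \<pi>)"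
  have b1: "b \<in> set (drop j (drop i \<pi>))" using b by (simp add: add.commute)
  have b2: "b \<in> set (drop i \<pi>)" using b1 by (meson in_set_dropD)
  have "a \<in> set (take i \<pi>) \<or> a \<in> set (take j (drop i \<pi>))" using a by (simp add: take_add)
  then show "a < b" using h b1 b2 by blast
qed (auto)

lemma splits_shift: "splits (map (\<lambda>s. s + c) \<beta>) i \<longleftrightarrow> splits \<beta> i"
  by (simp add: splits_def take_map drop_map)

lemma take_oplus: "take (length \<alpha>) (oplus \<alpha> \<beta>) = \<alpha>"
  by (simp add: oplus_def)
lemma drop_oplus: "drop (length \<alpha>) (oplus \<alpha> \<beta>) = map (\<lambda>s. s + length \<alpha>) \<beta>"
  by (simp add: oplus_def)

lemma oplus_splits:
  assumes "separable \<alpha>" "separable \<beta>"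
  shows "splits (oplus \<alpha> \<beta>) (length \<alpha>)"
proof -
  have ba: "\<alpha> \<noteq> []" "\<forall>s\<in>set \<alpha>. 1 \<le> s \<and> s \<le> length \<alpha>" using sep_basic[OF assms(1)] by auto
  have bb: "\<beta> \<noteq> []" "\<forall>s\<in>set \<beta>. 1 \<le> s \<and> s \<le> length \<beta>" using sep_basic[OF assms(2)] by auto
  show ?thesis unfolding splits_def take_oplus drop_oplus
  proof (intro conjI ballI)
    fix a b assume a: "a \<in> set \<alpha>" and b: "b \<in> set (map (\<lambda>s. s + length \<alpha>) \<beta>)"
    then obtain s where s: "s \<in> set \<beta>" "b = s + length \<alpha>" by auto
    have "a \<le> length \<alpha>" "1 \<le> s" using a s ba bb by auto
    then show "a < b" using s by linarith
  next
    show "1 \<le> length \<alpha>" using ba by (cases \<alpha>) auto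
    show "length \<alpha> < length (oplus \<alpha> \<beta>)" using bb by (simp add: oplus_def)
  qed
qed


lemma map_shift_inj: "map (\<lambda>s. s + (c::nat)) xs = map (\<lambda>s. s + c) ys \<Longrightarrow> xs = ys"
proof -
  assume h: "map (\<lambda>s. s + c) xs = map (\<lambda>s. s + c) ys"
  have "map (\<lambda>s. s - c) (map (\<lambda>s. s + c) xs) = map (\<lambda>s. s - c) (map (\<lambda>s. s + c) ys)"
    using h by simp
  then show ?thesis by (simp add: comp_def)
qed

lemma oplus_inj1:
  assumes "separable \<alpha>" "separable \<beta>" "separable \<alpha>'" "separable \<beta>'"
    "irreducible_perm \<alpha>" "irreducible_perm \<alpha>'" "oplus \<alpha> \<beta> = oplus \<alpha>' \<beta>'"
  shows "\<alpha> = \<alpha>' \<and> \<beta> = \<beta>'"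
proof -
  let ?p = "oplus \<alpha> \<beta>"
  have s1: "splits ?p (length \<alpha>)" using oplus_splits assms by blast
  have s2: "splits ?p (length \<alpha>')" using oplus_splits[OF assms(3,4)] assms(7) by simp
  have "length \<alpha> = length \<alpha>'"
  proof (rule ccontr)
    assume "length \<alpha> \<noteq> length \<alpha>'"
    then consider "length \<alpha> < length \<alpha>'" | "length \<alpha>' < length \<alpha>" by linarith
    then show False
    proof cases
      case 1
      from splits_take[OF s1 s2 1] have "splits \<alpha>' (length \<alpha>)" using assms(7) take_oplus by metis
      then show False using assms(6) irr_iff by blast
    next
      case 2
      from splits_take[OF s2 s1 2] have "splits \<alpha> (length \<alpha>')" using take_oplus by metis
      then show False using assms(5) irr_iff by blast
    qed
  qed
  then have "\<alpha> = \<alpha>'" using take_oplus assms(7) by metis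
  moreover have "\<beta> = \<beta>'" using drop_oplus assms(7) \<open>length \<alpha> = length \<alpha>'\<close> map_shift_inj by metis
  ultimately show ?thesis by simp
qed

lemma oplus_inj2:
  assumes "separable \<alpha>" "separable \<beta>" "separable \<alpha>'" "separable \<beta>'"
    "irreducible_perm \<beta>" "irreducible_perm \<beta>'" "oplus \<alpha> \<beta> = oplus \<alpha>' \<beta>'"
  shows "\<alpha> = \<alpha>' \<and> \<beta> = \<beta>'"
proof -
  let ?p = "oplus \<alpha> \<beta>"
  have s1: "splits ?p (length \<alpha>)" using oplus_splits assms by blast
  have s2: "splits ?p (length \<alpha>')" using oplus_splits[OF assms(3,4)] assms(7) by simp
  have "length \<alpha> = length \<alpha>'"
  proof (rule ccontr)
    assume "length \<alpha> \<noteq> length \<alpha>'"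
    then consider "length \<alpha> < length \<alpha>'" | "length \<alpha>' < length \<alpha>" by linarith
    then show False
    proof cases
      case 1
      from splits_drop[OF s1 s2 1] have "splits (map (\<lambda>s. s + length \<alpha>) \<beta>) (length \<alpha>' - length \<alpha>)"
        using drop_oplus by metis
      then show False using assms(5) irr_iff splits_shift by blast
    next
      case 2
      from splits_drop[OF s2 s1 2] have "splits (map (\<lambda>s. s + length \<alpha>') \<beta>') (length \<alpha> - length \<alpha>')"
        using drop_oplus assms(7) by metis
      then show False using assms(6) irr_iff splits_shift by blast
    qed
  qed
  then have "\<alpha> = \<alpha>'" using take_oplus assms(7) by metis
  moreover have "\<beta> = \<beta>'" using drop_oplus assms(7) \<open>length \<alpha> = length \<alpha>'\<close> map_shift_inj by metis
  ultimately show ?thesis by simp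
qed

lemma decomp_at:
  assumes "separable \<pi>" "splits \<pi> i"
  shows "separable (take i \<pi>) \<and> separable (map (\<lambda>s. s - i) (drop i \<pi>))
    \<and> \<pi> = oplus (take i \<pi>) (map (\<lambda>s. s - i) (drop i \<pi>)) \<and> length (take i \<pi>) = i
    \<and> drop i \<pi> = map (\<lambda>s. s + i) (map (\<lambda>s. s - i) (drop i \<pi>))"
proof -
  have h: "separable (take i \<pi>)" "separable (map (\<lambda>s. s - i) (drop i \<pi>))" "\<forall>s\<in>set (drop i \<pi>). i < s"
    using sep_split[OF assms] by auto
  have li: "length (take i \<pi>) = i" using assms(2) by (simp add: splits_def)
  have d: "drop i \<pi> = map (\<lambda>s. s + i) (map (\<lambda>s. s - i) (drop i \<pi>))"
    unfolding map_map by (rule sym, rule map_idI) (use h(3) in auto)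
  have "oplus (take i \<pi>) (map (\<lambda>s. s - i) (drop i \<pi>)) = take i \<pi> @ drop i \<pi>"
    unfolding oplus_def li using d by simp
  then show ?thesis using h li d by simp
qed



lemma bij1: "bij_betw (\<lambda>(a, b). oplus a b)
   {(a, b). (separable a \<and> irreducible_perm a) \<and> separable b \<and> length a + length b = n}
   {\<pi>. separable \<pi> \<and> \<not> irreducible_perm \<pi> \<and> length \<pi> = n}"
  unfolding bij_betw_def
proof (intro conjI)
  show "inj_on (\<lambda>(a, b). oplus a b)
     {(a, b). (separable a \<and> irreducible_perm a) \<and> separable b \<and> length a + length b = n}"
  proof (rule inj_onI, clarify)
    fix a b a' b' assume "separable a" "irreducible_perm a" "separable b" "separable a'"
      "irreducible_perm a'" "separable b'" "oplus a b = oplus a' b'"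
    then show "a = a' \<and> b = b'" using oplus_inj1 by blast
  qed
  show "(\<lambda>(a, b). oplus a b) ` {(a, b). (separable a \<and> irreducible_perm a) \<and> separable b \<and> length a + length b = n}
      = {\<pi>. separable \<pi> \<and> \<not> irreducible_perm \<pi> \<and> length \<pi> = n}"
  proof (intro set_eqI iffI)
    fix \<pi> assume "\<pi> \<in> (\<lambda>(a, b). oplus a b) ` {(a, b). (separable a \<and> irreducible_perm a) \<and> separable b \<and> length a + length b = n}"
    then obtain a b where ab: "separable a" "separable b" "length a + length b = n" "\<pi> = oplus a b" by auto
    have "separable \<pi>" using ab by (simp add: separable.plus)
    moreover have "\<not> irreducible_perm \<pi>" using oplus_splits[OF ab(1,2)] ab(4) irr_iff by blast
    moreover have "length \<pi> = n" using ab by (simp add: oplus_def)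
    ultimately show "\<pi> \<in> {\<pi>. separable \<pi> \<and> \<not> irreducible_perm \<pi> \<and> length \<pi> = n}" by simp
  next
    fix \<pi> assume "\<pi> \<in> {\<pi>. separable \<pi> \<and> \<not> irreducible_perm \<pi> \<and> length \<pi> = n}"
    then have p: "separable \<pi>" "\<not> irreducible_perm \<pi>" "length \<pi> = n" by auto
    then obtain k where k: "splits \<pi> k" using irr_iff by blast
    define i where "i = (LEAST i. splits \<pi> i)"
    have si: "splits \<pi> i" unfolding i_def using k by (rule LeastI)
    let ?a = "take i \<pi>" and ?b = "map (\<lambda>s. s - i) (drop i \<pi>)"
    have d: "separable ?a" "separable ?b" "\<pi> = oplus ?a ?b" "length ?a = i"
      using decomp_at[OF p(1) si] by auto
    have "irreducible_perm ?a"
    proof (rule ccontr)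
      assume "\<not> irreducible_perm ?a"
      then obtain j where j: "splits ?a j" using irr_iff by blast
      then have "splits \<pi> j" using splits_from_take si by blast
      then have "i \<le> j" unfolding i_def by (rule Least_le)
      moreover have "j < i" using j d(4) by (simp add: splits_def)
      ultimately show False by simp
    qed
    moreover have "length ?a + length ?b = n" using d(3) p(3) by (metis length_append length_map oplus_def)
    ultimately show "\<pi> \<in> (\<lambda>(a, b). oplus a b) ` {(a, b). (separable a \<and> irreducible_perm a) \<and> separable b \<and> length a + length b = n}"
      using d by (intro image_eqI[of _ _ "(?a, ?b)"]) auto
  qed
qed

lemma splits_bound: "splits \<pi> i \<Longrightarrow> i \<le> length \<pi>"
  by (simp add: splits_def)

lemma bij2: "bij_betw (\<lambda>(a, b). oplus a b)
   {(a, b). separable a \<and> (separable b \<and> irreducible_perm b) \<and> length a + length b = n}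
   {\<pi>. separable \<pi> \<and> \<not> irreducible_perm \<pi> \<and> length \<pi> = n}"
  unfolding bij_betw_def
proof (intro conjI)
  show "inj_on (\<lambda>(a, b). oplus a b)
     {(a, b). separable a \<and> (separable b \<and> irreducible_perm b) \<and> length a + length b = n}"
  proof (rule inj_onI, clarify)
    fix a b a' b' assume "separable a" "irreducible_perm b" "separable b" "separable a'"
      "irreducible_perm b'" "separable b'" "oplus a b = oplus a' b'"
    then show "a = a' \<and> b = b'" using oplus_inj2 by blast
  qed
  show "(\<lambda>(a, b). oplus a b) ` {(a, b). separable a \<and> (separable b \<and> irreducible_perm b) \<and> length a + length b = n}
      = {\<pi>. separable \<pi> \<and> \<not> irreducible_perm \<pi> \<and> length \<pi> = n}"
  proof (intro set_eqI iffI)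
    fix \<pi> assume "\<pi> \<in> (\<lambda>(a, b). oplus a b) ` {(a, b). separable a \<and> (separable b \<and> irreducible_perm b) \<and> length a + length b = n}"
    then obtain a b where ab: "separable a" "separable b" "length a + length b = n" "\<pi> = oplus a b" by auto
    have "separable \<pi>" using ab by (simp add: separable.plus)
    moreover have "\<not> irreducible_perm \<pi>" using oplus_splits[OF ab(1,2)] ab(4) irr_iff by blast
    moreover have "length \<pi> = n" using ab by (simp add: oplus_def)
    ultimately show "\<pi> \<in> {\<pi>. separable \<pi> \<and> \<not> irreducible_perm \<pi> \<and> length \<pi> = n}" by simp
  next
    fix \<pi> assume "\<pi> \<in> {\<pi>. separable \<pi> \<and> \<not> irreducible_perm \<pi> \<and> length \<pi> = n}"
    then have p: "separable \<pi>" "\<not> irreducible_perm \<pi>" "length \<pi> = n" by auto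
    then obtain k where k: "splits \<pi> k" using irr_iff by blast
    define i where "i = (GREATEST i. splits \<pi> i)"
    have si: "splits \<pi> i" unfolding i_def using k splits_bound by (rule GreatestI_nat)
    have gi: "j \<le> i" if "splits \<pi> j" for j unfolding i_def using that splits_bound by (rule Greatest_le_nat)
    let ?a = "take i \<pi>" and ?b = "map (\<lambda>s. s - i) (drop i \<pi>)"
    have d: "separable ?a" "separable ?b" "\<pi> = oplus ?a ?b" "length ?a = i"
        "drop i \<pi> = map (\<lambda>s. s + i) ?b"
      using decomp_at[OF p(1) si] by auto
    have "irreducible_perm ?b"
    proof (rule ccontr)
      assume "\<not> irreducible_perm ?b"
      then obtain j where j: "splits ?b j" using irr_iff by blast
      then have "splits (drop i \<pi>) j" using splits_shift d(5) by metis
      then have "splits \<pi> (i + j)" using splits_from_drop si by blast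
      then have "i + j \<le> i" by (rule gi)
      moreover have "1 \<le> j" using j by (simp add: splits_def)
      ultimately show False by simp
    qed
    moreover have "length ?a + length ?b = n" using d(3) p(3) by (metis length_append length_map oplus_def)
    ultimately show "\<pi> \<in> (\<lambda>(a, b). oplus a b) ` {(a, b). separable a \<and> (separable b \<and> irreducible_perm b) \<and> length a + length b = n}"
      using d by (intro image_eqI[of _ _ "(?a, ?b)"]) auto
  qed
qed

lemma conv_sum:
  fixes f g :: "nat list \<Rightarrow> 'a::comm_ring_1"
  assumes fx: "\<And>i. finite {a. PX a \<and> length a = i}" and fy: "\<And>i. finite {b. PY b \<and> length b = i}"
  shows "(\<Sum>i=0..n. (\<Sum>a\<in>{a. PX a \<and> length a = i}. f a) * (\<Sum>b\<in>{b. PY b \<and> length b = n - i}. g b))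
    = (\<Sum>(a, b)\<in>{(a, b). PX a \<and> PY b \<and> length a + length b = n}. f a * g b)"
proof -
  let ?X = "\<lambda>i. {a. PX a \<and> length a = i}" and ?Y = "\<lambda>i. {b. PY b \<and> length b = i}"
  have "(\<Sum>i=0..n. (\<Sum>a\<in>?X i. f a) * (\<Sum>b\<in>?Y (n - i). g b))
      = (\<Sum>i=0..n. (\<Sum>(a, b)\<in>?X i \<times> ?Y (n - i). f a * g b))"
    by (simp add: sum_product sum.cartesian_product)
  also have "\<dots> = (\<Sum>(a, b)\<in>(\<Union>i\<in>{0..n}. ?X i \<times> ?Y (n - i)). f a * g b)"
    by (rule sym, rule sum.UNION_disjoint) (use fx fy in auto)
  also have "(\<Union>i\<in>{0..n}. ?X i \<times> ?Y (n - i)) = {(a, b). PX a \<and> PY b \<and> length a + length b = n}"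
    by auto
  finally show ?thesis .
qed

lemma finite_irr: "finite {a. (separable a \<and> irreducible_perm a) \<and> length a = i}"
  by (rule finite_subset[OF _ finite_sep[of i]]) auto

lemma finite_sep': "finite {a. separable a \<and> length a = i}"
  by (rule finite_sep)

lemma coeff_diff:
  "fps_nth (S_gf p q x y u v - I_gf p q x y u v) n
     = (\<Sum>\<pi>\<in>{\<pi>. separable \<pi> \<and> \<not> irreducible_perm \<pi> \<and> length \<pi> = n}. perm_weight p q x y u v \<pi>)"
proof -
  let ?w = "perm_weight p q x y u v"
  have e: "{\<pi>. separable \<pi> \<and> length \<pi> = n} = {\<pi>. separable \<pi> \<and> irreducible_perm \<pi> \<and> length \<pi> = n}
     \<union> {\<pi>. separable \<pi> \<and> \<not> irreducible_perm \<pi> \<and> length \<pi> = n}" by auto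
  have "sum ?w {\<pi>. separable \<pi> \<and> length \<pi> = n} = sum ?w {\<pi>. separable \<pi> \<and> irreducible_perm \<pi> \<and> length \<pi> = n}
     + sum ?w {\<pi>. separable \<pi> \<and> \<not> irreducible_perm \<pi> \<and> length \<pi> = n}"
    unfolding e by (rule sum.union_disjoint) (auto intro: finite_subset[OF _ finite_sep[of n]])
  then show ?thesis by (simp add: S_gf_def I_gf_def)
qed

lemma coeff_prod1:
  "fps_nth (fps_const p * I_gf p q x 1 u v * S_gf p q x y 1 v) n
     = (\<Sum>\<pi>\<in>{\<pi>. separable \<pi> \<and> \<not> irreducible_perm \<pi> \<and> length \<pi> = n}. perm_weight p q x y u v \<pi>)"
proof -
  let ?f = "perm_weight p q x 1 u v" and ?g = "perm_weight p q x y 1 v"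
  have "fps_nth (fps_const p * I_gf p q x 1 u v * S_gf p q x y 1 v) n
      = p * (\<Sum>i=0..n. (\<Sum>a\<in>{a. (separable a \<and> irreducible_perm a) \<and> length a = i}. ?f a)
              * (\<Sum>b\<in>{b. separable b \<and> length b = n - i}. ?g b))"
    apply (subst mult.assoc, subst fps_mult_left_const_nth, subst fps_mult_nth)
    apply (simp only: S_gf_def I_gf_def fps_nth_Abs_fps conj_assoc)
    done
  also have "\<dots> = p * (\<Sum>(a, b)\<in>{(a, b). (separable a \<and> irreducible_perm a) \<and> separable b \<and> length a + length b = n}. ?f a * ?g b)"
    by (subst conv_sum[OF finite_irr finite_sep']) (rule refl)
  also have "\<dots> = (\<Sum>(a, b)\<in>{(a, b). (separable a \<and> irreducible_perm a) \<and> separable b \<and> length a + length b = n}.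
        perm_weight p q x y u v (oplus a b))"
    unfolding sum_distrib_left
    by (rule sum.cong) (auto simp: weight_oplus mult.assoc)
  also have "\<dots> = (\<Sum>\<pi>\<in>{\<pi>. separable \<pi> \<and> \<not> irreducible_perm \<pi> \<and> length \<pi> = n}. perm_weight p q x y u v \<pi>)"
    using sum.reindex_bij_betw[OF bij1, of "perm_weight p q x y u v" n] by (simp add: case_prod_unfold)
  finally show ?thesis .
qed

lemma coeff_prod2:
  "fps_nth (fps_const p * S_gf p q x 1 u v * I_gf p q x y 1 v) n
     = (\<Sum>\<pi>\<in>{\<pi>. separable \<pi> \<and> \<not> irreducible_perm \<pi> \<and> length \<pi> = n}. perm_weight p q x y u v \<pi>)"
proof -
  let ?f = "perm_weight p q x 1 u v" and ?g = "perm_weight p q x y 1 v"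
  have "fps_nth (fps_const p * S_gf p q x 1 u v * I_gf p q x y 1 v) n
      = p * (\<Sum>i=0..n. (\<Sum>a\<in>{a. separable a \<and> length a = i}. ?f a)
              * (\<Sum>b\<in>{b. (separable b \<and> irreducible_perm b) \<and> length b = n - i}. ?g b))"
    apply (subst mult.assoc, subst fps_mult_left_const_nth, subst fps_mult_nth)
    apply (simp only: S_gf_def I_gf_def fps_nth_Abs_fps conj_assoc)
    done
  also have "\<dots> = p * (\<Sum>(a, b)\<in>{(a, b). separable a \<and> (separable b \<and> irreducible_perm b) \<and> length a + length b = n}. ?f a * ?g b)"
    by (subst conv_sum[OF finite_sep' finite_irr]) (rule refl)
  also have "\<dots> = (\<Sum>(a, b)\<in>{(a, b). separable a \<and> (separable b \<and> irreducible_perm b) \<and> length a + length b = n}.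
        perm_weight p q x y u v (oplus a b))"
    unfolding sum_distrib_left
    by (rule sum.cong) (auto simp: weight_oplus mult.assoc)
  also have "\<dots> = (\<Sum>\<pi>\<in>{\<pi>. separable \<pi> \<and> \<not> irreducible_perm \<pi> \<and> length \<pi> = n}. perm_weight p q x y u v \<pi>)"
    using sum.reindex_bij_betw[OF bij2, of "perm_weight p q x y u v" n] by (simp add: case_prod_unfold)
  finally show ?thesis .
qed

theorem theorem10:
  fixes p q x y u v :: "'a::comm_ring_1"
  shows "S_gf p q x y u v - I_gf p q x y u v
           = fps_const p * I_gf p q x 1 u v * S_gf p q x y 1 v
      \<and> S_gf p q x y u v - I_gf p q x y u v
           = fps_const p * I_gf p q x y 1 v * S_gf p q x 1 u v"
proof
  show "S_gf p q x y u v - I_gf p q x y u v = fps_const p * I_gf p q x 1 u v * S_gf p q x y 1 v"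
    by (rule fps_ext) (simp only: coeff_diff coeff_prod1)
  have "fps_const p * I_gf p q x y 1 v * S_gf p q x 1 u v = fps_const p * S_gf p q x 1 u v * I_gf p q x y 1 v"
    by (simp add: mult_ac)
  then show "S_gf p q x y u v - I_gf p q x y u v = fps_const p * I_gf p q x y 1 v * S_gf p q x 1 u v"
    by (simp only:) (rule fps_ext, simp only: coeff_diff coeff_prod2)
qed


end
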